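(* Let $n\ge 1$, let $\Gamma\in G_n$, and let $M_\Gamma\in M_{n+1,n}(\mathbb{N})$ be its multiplicity matrix. If $\mathrm{rank}(M_\Gamma)=n$, then $\Gamma$ has a minimal reduction, i.e. there is a subgraph $\gamma$ of $\Gamma$, obtained from $\Gamma$ by deleting edges only, such that $\gamma\in G_n$ and $\gamma$ has exactly $n+1$ edges.
   Context: For $n\ge 1$, $G_n$ denotes the set of finite (multi)graphs with $2n+1$ vertices, $n$ of them in "level 1" and $n+1$ in "level 2", such that (I) every edge joins a level-1 vertex to a level-2 vertex (no edges within a level; multiple edges allowed), and (II) every vertex is incident to at least one edge. Ordering the level-1 vertices $1,\dots,n$ and level-2 vertices $1,\dots,n+1$, the multiplicity matrix $M_\Gamma$ has $(i,j)$ entry equal to the number of edges joining level-2 vertex $i$ and level-1 vertex $j$. Rank is over $\mathbb{Q}$ (equivalently $\mathbb{C}$). *)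

theory Defs
  imports "Jordan_Normal_Form.DL_Rank"
begin

text \<open>A finite bipartite multigraph with n level-1 vertices (indexed 0..n-1) and
  n+1 level-2 vertices (indexed 0..n) with edges only between levels is determined by
  its multiplicities: E i j = number of edges joining level-2 vertex i and level-1 vertex j.
  Values of E outside the index range are irrelevant.\<close>

definition in_G :: "nat \<Rightarrow> (nat \<Rightarrow> nat \<Rightarrow> nat) \<Rightarrow> bool" where
  "in_G n E \<longleftrightarrow>
     (\<forall>i<n+1. \<exists>j<n. E i j > 0) \<and> (\<forall>j<n. \<exists>i<n+1. E i j > 0)"

definition mult_matrix :: "nat \<Rightarrow> (nat \<Rightarrow> nat \<Rightarrow> nat) \<Rightarrow> rat mat" where
  "mult_matrix n E = mat (n+1) n (\<lambda>(i,j). of_nat (E i j))"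

definition num_edges :: "nat \<Rightarrow> (nat \<Rightarrow> nat \<Rightarrow> nat) \<Rightarrow> nat" where
  "num_edges n E = (\<Sum>i<n+1. \<Sum>j<n. E i j)"

definition edge_subgraph :: "nat \<Rightarrow> (nat \<Rightarrow> nat \<Rightarrow> nat) \<Rightarrow> (nat \<Rightarrow> nat \<Rightarrow> nat) \<Rightarrow> bool" where
  "edge_subgraph n e E \<longleftrightarrow> (\<forall>i<n+1. \<forall>j<n. e i j \<le> E i j)"

end

theory Submission
  imports Defs
begin

lemma (in vec_space) non_distinct_low_rank':
assumes "A \<in> carrier_mat n nc"
and "\<not> distinct (cols A)"
shows "rank A < nc"
proof -
  obtain S where "maximal S (\<lambda>T. T \<subseteq> set (cols A) \<and> lin_indpt T)"
    using maximal_exists[of "(\<lambda>T. T \<subseteq> set (cols A) \<and> lin_indpt T)" "card (set (cols A))" "{}"]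
    by (meson List.finite_set card_mono empty_iff empty_subsetI finite_lin_indpt2 rev_finite_subset)
  then have "card S \<le> card (set (cols A))" by (simp add: card_mono maximal_def)
  then have "card S < nc"
    using assms(1) cols_length card_length \<open>\<not> distinct (cols A)\<close> card_distinct carrier_matD(2) nat_less_le
    by (metis dual_order.antisym dual_order.trans)
  then show ?thesis
    using rank_card_indpt[OF \<open>A \<in> carrier_mat n nc\<close> \<open>maximal S (\<lambda>T. T \<subseteq> set (cols A) \<and> lin_indpt T)\<close>]
    by simp
qed

lemma ker_triv:
  fixes A :: "'a::field mat"
  assumes A: "A \<in> carrier_mat m nc" and r: "vec_space.rank m A = nc"
    and v: "v \<in> carrier_vec nc" and Av: "A *\<^sub>v v = 0\<^sub>v m"
  shows "v = 0\<^sub>v nc"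
proof (rule ccontr)
  assume nz: "v \<noteq> 0\<^sub>v nc"
  interpret vec_space "TYPE('a)" m .
  show False
  proof (cases "distinct (cols A)")
    case True
    then have "lin_indpt (set (cols A))" using full_rank_lin_indpt A r by blast
    moreover have "lin_dep (set (cols A))" using lin_depI[OF A v nz Av True] .
    ultimately show False by blast
  next
    case False
    then show False using non_distinct_low_rank'[OF A False] r by simp
  qed
qed

theorem theorem3p1:
  fixes n :: nat and E :: "nat \<Rightarrow> nat \<Rightarrow> nat"
  assumes "n \<ge> 1"
    and "in_G n E"
    and "vec_space.rank (n+1) (mult_matrix n E) = n"
  shows "\<exists>e. edge_subgraph n e E \<and> in_G n e \<and> num_edges n e = n + 1"
proof -
  define a where "a = (\<lambda>i j. (of_nat (E i j) :: rat))"
  define M where "M = mult_matrix n E"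
  have Mc: "M \<in> carrier_mat (n+1) n" unfolding M_def mult_matrix_def by simp
  have Mij: "M $$ (i,j) = a i j" if "i < n+1" "j < n" for i j
    using that unfolding M_def mult_matrix_def a_def by simp
  have ker: "v = 0\<^sub>v n" if "v \<in> carrier_vec n" "M *\<^sub>v v = 0\<^sub>v (n+1)" for v
    using ker_triv[OF Mc _ that] assms(3) unfolding M_def by simp
  define C where "C = mat (n+1) (n+1) (\<lambda>(i,k). if i < n then a k i else 0)"
  have Cc: "C \<in> carrier_mat (n+1) (n+1)" unfolding C_def by simp
  have "det C = 0"
  proof -
    have "(\<Prod>i = 0..<n+1. C $$ (i, p i)) = 0" if "p permutes {0..<n+1}" for p
    proof -
      have "p n < n+1" using permutes_in_image[OF that] by simp
      then have "C $$ (n, p n) = 0" unfolding C_def by simp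
      then show ?thesis by (intro prod_zero) auto
    qed
    then show ?thesis unfolding det_def'[OF Cc] by (intro sum.neutral) simp
  qed
  then obtain u where u: "u \<in> carrier_vec (n+1)" "u \<noteq> 0\<^sub>v (n+1)" "C *\<^sub>v u = 0\<^sub>v (n+1)"
    using det_0_iff_vec_prod_zero_field[OF Cc] by blast
  have uz: "(\<Sum>k<n+1. a k j * u $ k) = 0" if "j < n" for j
  proof -
    have "(C *\<^sub>v u) $ j = 0" using u(3) that by simp
    moreover have "(C *\<^sub>v u) $ j = (\<Sum>k<n+1. a k j * u $ k)"
      using that u(1) unfolding C_def
      by (simp add: scalar_prod_def row_def atLeast0LessThan)
    ultimately show ?thesis by simp
  qed
  obtain r where r: "r < n+1" "u $ r \<noteq> 0"
    using u(1,2) by (metis carrier_vecD eq_vecI index_zero_vec(1) index_zero_vec(2))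
  define sk where "sk = (\<lambda>i::nat. if i < r then i else Suc i)"
  define usk where "usk = (\<lambda>i::nat. if i < r then i else i - 1)"
  have sk1: "sk i < n+1" "sk i \<noteq> r" "usk (sk i) = i" if "i < n" for i
    using that unfolding sk_def usk_def by auto
  have sk2: "usk k < n" "sk (usk k) = k" if "k < n+1" "k \<noteq> r" for k
    using that r unfolding sk_def usk_def by auto
  define B where "B = mat n n (\<lambda>(i,j). a (sk i) j)"
  have Bc: "B \<in> carrier_mat n n" unfolding B_def by simp
  have "det B \<noteq> 0"
  proof
    assume "det B = 0"
    then obtain v where v: "v \<in> carrier_vec n" "v \<noteq> 0\<^sub>v n" "B *\<^sub>v v = 0\<^sub>v n"
      using det_0_iff_vec_prod_zero_field[OF Bc] by blast
    define w where "w = (\<lambda>k. \<Sum>j<n. a k j * v $ j)"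
    have w1: "w k = 0" if "k < n+1" "k \<noteq> r" for k
    proof -
      have "(B *\<^sub>v v) $ (usk k) = 0" using v(3) sk2[OF that] by simp
      moreover have "(B *\<^sub>v v) $ (usk k) = w (sk (usk k))"
        using sk2[OF that] v(1) unfolding B_def w_def
        by (simp add: scalar_prod_def row_def atLeast0LessThan)
      ultimately show ?thesis using sk2[OF that] by simp
    qed
    have "(\<Sum>k<n+1. u $ k * w k) = (\<Sum>k<n+1. \<Sum>j<n. u $ k * a k j * v $ j)"
      unfolding w_def by (simp add: sum_distrib_left mult.assoc)
    also have "\<dots> = (\<Sum>j<n. \<Sum>k<n+1. u $ k * a k j * v $ j)" by (rule sum.swap)
    also have "\<dots> = (\<Sum>j<n. (\<Sum>k<n+1. a k j * u $ k) * v $ j)"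
      unfolding sum_distrib_right by (intro sum.cong refl) (simp add: mult_ac)
    also have "\<dots> = 0" using uz by simp
    finally have s0: "(\<Sum>k<n+1. u $ k * w k) = 0" .
    have "(\<Sum>k<n+1. u $ k * w k) = u $ r * w r + (\<Sum>k\<in>{..<n+1}-{r}. u $ k * w k)"
      using r by (intro sum.remove) auto
    also have "(\<Sum>k\<in>{..<n+1}-{r}. u $ k * w k) = 0"
      using w1 by (intro sum.neutral) auto
    finally have "w r = 0" using s0 r by simp
    then have wz: "w k = 0" if "k < n+1" for k using w1 that by (cases "k = r") auto
    have "M *\<^sub>v v = 0\<^sub>v (n+1)"
    proof (rule eq_vecI)
      show "dim_vec (M *\<^sub>v v) = dim_vec (0\<^sub>v (n + 1))" using Mc by simp
      fix k assume "k < dim_vec (0\<^sub>v (n + 1))"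
      then have k: "k < n+1" by simp
      have "(M *\<^sub>v v) $ k = w k"
        using k Mc v(1) Mij unfolding w_def
        by (simp add: scalar_prod_def row_def atLeast0LessThan)
      then show "(M *\<^sub>v v) $ k = 0\<^sub>v (n + 1) $ k" using wz k by simp
    qed
    then show False using ker v by blast
  qed
  have "\<exists>p. p permutes {0..<n} \<and> (\<Prod>i = 0..<n. B $$ (i, p i)) \<noteq> 0"
  proof (rule ccontr)
    assume "\<not> ?thesis"
    then have "det B = 0" unfolding det_def'[OF Bc] by (intro sum.neutral) auto
    with \<open>det B \<noteq> 0\<close> show False by simp
  qed
  then obtain p where p: "p permutes {0..<n}" "(\<Prod>i = 0..<n. B $$ (i, p i)) \<noteq> 0"
    by blast
  have pE: "E (sk i) (p i) > 0" if "i < n" for i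
  proof -
    have "B $$ (i, p i) \<noteq> 0" using p(2) that by auto
    moreover have "p i < n" using permutes_in_image[OF p(1)] that by simp
    ultimately show ?thesis using that unfolding B_def a_def by simp
  qed
  obtain j0 where j0: "j0 < n" "E r j0 > 0" using assms(2) r unfolding in_G_def by blast
  define e where "e = (\<lambda>k j. if k = r then (if j = j0 then 1 else 0)
                     else (if j = p (usk k) then (1::nat) else 0))"
  have rowp: "p (usk k) < n" if "k < n+1" "k \<noteq> r" for k
    using permutes_in_image[OF p(1)] sk2[OF that] by simp
  have "edge_subgraph n e E"
    unfolding edge_subgraph_def
  proof (intro allI impI)
    fix i j assume ij: "i < n+1" "j < n"
    show "e i j \<le> E i j"
    proof (cases "i = r")
      case True then show ?thesis using j0 unfolding e_def by simp
    next
      case False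
      then show ?thesis using pE[OF sk2(1)[OF ij(1) False]] sk2[OF ij(1) False]
        unfolding e_def by simp
    qed
  qed
  moreover have "in_G n e"
    unfolding in_G_def
  proof (intro conjI allI impI)
    fix i assume i: "i < n+1"
    show "\<exists>j<n. 0 < e i j"
    proof (cases "i = r")
      case True then show ?thesis using j0 unfolding e_def by auto
    next
      case False then show ?thesis using rowp[OF i False] unfolding e_def by auto
    qed
  next
    fix j assume j: "j < n"
    have "j \<in> p ` {0..<n}" using permutes_image[OF p(1)] j by simp
    then obtain i where i: "i < n" "p i = j" by auto
    show "\<exists>i<n+1. 0 < e i j"
      using sk1[OF i(1)] i unfolding e_def by (intro exI[of _ "sk i"]) auto
  qed
  moreover have "num_edges n e = n + 1"
  proof -
    have "(\<Sum>j<n. e k j) = 1" if "k < n+1" for k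
    proof (cases "k = r")
      case True then show ?thesis using j0 unfolding e_def by simp
    next
      case False then show ?thesis using rowp[OF that False] unfolding e_def by simp
    qed
    then show ?thesis unfolding num_edges_def by simp
  qed
  ultimately show ?thesis by blast
qed

end
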